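(* Define polynomials $P_0(x)=x$ and $P_{j+1}(x)=-\big[(j+1)xP_j(x)+(1-x^2)P_j'(x)\big]$ for $j\ge0$. Then for every $j\ge0$ and every $x\in\mathbb{R}\setminus\mathbb{Z}$, $$P_j(\cos\pi x)=\pi^{-j}\sin^{j+1}(\pi x)\,\frac{d^j}{dx^j}\cot(\pi x).$$ *)

theory Defs
  imports "HOL-Analysis.Analysis" "HOL-Computational_Algebra.Polynomial"
begin

fun Pcot :: "nat \<Rightarrow> real poly" where
  "Pcot 0 = [:0, 1:]"
| "Pcot (Suc j) = - (smult (real (j + 1)) ([:0, 1:] * Pcot j) + [:1, 0, -1:] * pderiv (Pcot j))"

end

theory Submission
  imports Defs
begin

lemma sin_pi_nz: "(x::real) \<notin> \<int> \<Longrightarrow> sin (pi * x) \<noteq> 0"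
  using sin_times_pi_eq_0[of x] by (simp add: mult.commute)

lemma ev_nonint: "(x::real) \<notin> \<int> \<Longrightarrow> eventually (\<lambda>t. t \<notin> \<int>) (nhds x)"
  using eventually_nhds_in_open[of "- \<int>" x] closed_Ints by (simp add: open_Compl)

lemma g_deriv:
  assumes "x \<notin> \<int>"
  shows "((\<lambda>t. pi ^ j * poly (Pcot j) (cos (pi * t)) / sin (pi * t) ^ (j + 1)) has_real_derivative
          pi ^ Suc j * poly (Pcot (Suc j)) (cos (pi * x)) / sin (pi * x) ^ (Suc j + 1)) (at x)"
proof -
  let ?c = "cos (pi * x)" and ?s = "sin (pi * x)"
  have s: "?s \<noteq> 0" using sin_pi_nz[OF assms] .
  have sc: "1 - ?c^2 = ?s^2" by (simp add: sin_squared_eq)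
  have d1: "((\<lambda>t. poly (Pcot j) (cos (pi * t))) has_real_derivative
      poly (pderiv (Pcot j)) ?c * (- sin (pi * x) * pi)) (at x)"
    by (rule DERIV_chain2[OF poly_DERIV]) (auto intro!: derivative_eq_intros)
  have d1': "((\<lambda>t. pi ^ j * poly (Pcot j) (cos (pi * t))) has_real_derivative
      pi ^ j * (poly (pderiv (Pcot j)) ?c * (- sin (pi * x) * pi))) (at x)"
    by (rule DERIV_cmult[OF d1])
  have d2: "((\<lambda>t. sin (pi * t) ^ (j + 1)) has_real_derivative
      real (j+1) * ?s ^ j * (cos (pi * x) * pi)) (at x)"
    by (auto intro!: derivative_eq_intros) (cases j; simp add: algebra_simps)
  have s2: "?s ^ (j+1) \<noteq> 0" using s by simp
  show ?thesis
  proof (rule DERIV_cong[OF DERIV_divide[OF d1' d2 s2]])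
    have "poly (Pcot (Suc j)) ?c = - (real (j+1) * ?c * poly (Pcot j) ?c + (1 - ?c^2) * poly (pderiv (Pcot j)) ?c)"
      by (simp add: algebra_simps power2_eq_square)
    then have "poly (Pcot (Suc j)) ?c = - (real (j+1) * ?c * poly (Pcot j) ?c + ?s^2 * poly (pderiv (Pcot j)) ?c)"
      by (simp only: sc)
    then show "(pi ^ j * (poly (pderiv (Pcot j)) ?c * (- ?s * pi)) * ?s ^ (j + 1) -
       pi ^ j * poly (Pcot j) ?c * (real (j + 1) * ?s ^ j * (?c * pi))) /
      (?s ^ (j + 1) * ?s ^ (j + 1)) =
      pi ^ Suc j * poly (Pcot (Suc j)) ?c / ?s ^ (Suc j + 1)"
      using s by (simp add: field_simps power2_eq_square) (simp only: distrib_left[symmetric])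
  qed
qed

lemma main: "x \<notin> \<int> \<Longrightarrow> (deriv ^^ j) (\<lambda>t. cot (pi * t)) x =
   pi ^ j * poly (Pcot j) (cos (pi * x)) / sin (pi * x) ^ (j + 1)"
proof (induction j arbitrary: x)
  case 0
  then show ?case by (simp add: cot_def)
next
  case (Suc j)
  have "(deriv ^^ Suc j) (\<lambda>t. cot (pi * t)) x = deriv ((deriv ^^ j) (\<lambda>t. cot (pi * t))) x"
    by simp
  also have "\<dots> = deriv (\<lambda>t. pi ^ j * poly (Pcot j) (cos (pi * t)) / sin (pi * t) ^ (j + 1)) x"
    by (rule deriv_cong_ev[OF eventually_mono[OF ev_nonint[OF Suc.prems]]]) (use Suc.IH in auto)
  also have "\<dots> = pi ^ Suc j * poly (Pcot (Suc j)) (cos (pi * x)) / sin (pi * x) ^ (Suc j + 1)"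
    by (rule DERIV_imp_deriv[OF g_deriv[OF Suc.prems]])
  finally show ?case .
qed

theorem lemma4p2:
  fixes j :: nat and x :: real
  assumes "x \<notin> \<int>"
  shows "poly (Pcot j) (cos (pi * x)) =
         (1 / pi) ^ j * sin (pi * x) ^ (j + 1) * (deriv ^^ j) (\<lambda>t. cot (pi * t)) x"
  using main[OF assms, of j] sin_pi_nz[OF assms] pi_gt_zero
  by (simp add: field_simps)

end
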